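(* Fix integers $L\ge 2$, $D\ge 1$, class centroids $\boldsymbol\mu_1,\dots,\boldsymbol\mu_L\in\mathbb R^D$, and a diagonal covariance matrix $\mathbf C=\mathrm{diag}(C_{1,1},\dots,C_{D,D})$ with $C_{d,d}>0$. Let $\tilde{\mathcal D}\subseteq\{1,\dots,D\}$ be a nonempty set of selected feature dimensions such that the reduced centroids $\tilde{\boldsymbol\mu}_\ell$ (restrictions of $\boldsymbol\mu_\ell$ to the coordinates in $\tilde{\mathcal D}$) are pairwise distinct, and let $\tilde{\mathbf C}$ be the restriction of $\mathbf C$ to $\tilde{\mathcal D}\times\tilde{\mathcal D}$. Let $\mathcal S$ be a nonempty finite set of sensors with fixed weights $w_m\ge 0$, $\sum_{m\in\mathcal S}w_m=1$. Fix a ground-truth class $\ell_0$, relevance indicators $I_m\in\{0,1\}$ for $m\in\mathcal S$, and, for each $m$ with $I_m=0$, a class $\ell_m\neq\ell_0$. Suppose the reduced features $\tilde{\mathbf f}_m$, $m\in\mathcal S$, are independent with $\tilde{\mathbf f}_m\sim\mathcal N(\tilde{\boldsymbol\mu}_{\ell_0},\tilde{\mathbf C})$ if $I_m=1$ and $\tilde{\mathbf f}_m\sim\mathcal N(\tilde{\boldsymbol\mu}_{\ell_m},\tilde{\mathbf C})$ if $I_m=0$. Let $\tilde{\mathbf f}_{\mathsf g}=\sum_{m\in\mathcal S}w_m\tilde{\mathbf f}_m$ and let $\hat\ell\in\arg\min_{\ell} (\tilde{\mathbf f}_{\mathsf g}-\tilde{\boldsymbol\mu}_\ell)^T\tilde{\mathbf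 C}^{-1}(\tilde{\mathbf f}_{\mathsf g}-\tilde{\boldsymbol\mu}_\ell)$. Then $$\Pr(\hat\ell=\ell_0)\ \ge\ 1-(L-1)\,Q\!\left[\frac{1}{\sqrt{\eta}}\left(\frac{\sqrt{\tilde G_{\min}}}{2}-2(1-\rho)\tilde\delta_{\max}\right)\right],$$ where $\rho=\sum_{m\in\mathcal S}I_m w_m$, $\eta=\sum_{m\in\mathcal S}w_m^2$, $\tilde G_{\min}=\min_{\ell\neq\ell'}\sum_{d\in\tilde{\mathcal D}}\frac{(\mu_{\ell,d}-\mu_{\ell',d})^2}{C_{d,d}}$ and $\tilde\delta_{\max}=\max_\ell\sqrt{\sum_{d\in\tilde{\mathcal D}}\frac{\mu_{\ell,d}^2}{C_{d,d}}}$. Consequently the same lower bound holds for the accuracy averaged over a uniformly distributed $\ell_0\in\{1,\dots,L\}$ and over any distribution of the irrelevant sensors' classes $\ell_m\ne\ell_0$. *)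

theory Defs
  imports "HOL-Probability.Probability"
begin

definition Qfun :: "real \<Rightarrow> real" where
  "Qfun x = measure (density lborel std_normal_density) {x<..}"

definition gauss_diag :: "nat set \<Rightarrow> (nat \<Rightarrow> real) \<Rightarrow> (nat \<Rightarrow> real) \<Rightarrow> (nat \<Rightarrow> real) measure" where
  "gauss_diag Dt mu C = PiM Dt (\<lambda>d. density lborel (normal_density (mu d) (sqrt (C d))))"

definition mahal :: "nat set \<Rightarrow> (nat \<Rightarrow> real) \<Rightarrow> (nat \<Rightarrow> real) \<Rightarrow> (nat \<Rightarrow> real) \<Rightarrow> real" where
  "mahal Dt C x mu = (\<Sum>d\<in>Dt. (x d - mu d)^2 / C d)"

end

theory Submission
  imports Defs
begin


lemma gauss_lin:
  fixes J :: "nat set" and m s c :: "nat \<Rightarrow> real"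
  assumes J: "finite J" and s: "\<And>d. d\<in>J \<Longrightarrow> s d > 0" and c: "\<exists>d\<in>J. c d \<noteq> 0"
  shows "distributed (PiM J (\<lambda>d. density lborel (normal_density (m d) (s d)))) lborel
           (\<lambda>v. \<Sum>d\<in>J. c d * v d)
           (normal_density (\<Sum>d\<in>J. c d * m d) (sqrt (\<Sum>d\<in>J. (c d * s d)^2)))"
proof -
  define N where "N = (\<lambda>d. density lborel (normal_density (m d) (s d)))"
  define P where "P = PiM J N"
  have probN: "\<And>d. d \<in> J \<Longrightarrow> prob_space (N d)" unfolding N_def by (rule prob_space_normal_density) (rule s)
  interpret P: prob_space P unfolding P_def by (rule prob_space_PiM) (rule probN)
  define K where "K = {d\<in>J. c d \<noteq> 0}"
  have K: "finite K" "K \<noteq> {}" "K \<subseteq> J" using J c by (auto simp: K_def)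
  have Jne: "J \<noteq> {}" using c by auto
  have setsN[simp]: "\<And>d. sets (N d) = sets borel" by (simp add: N_def)
  have measN: "\<And>d (g::real\<Rightarrow>real). g \<in> borel_measurable borel \<Longrightarrow> g \<in> measurable (N d) borel"
    by (subst measurable_cong_sets[of _ borel borel borel]) simp_all
  have comp: "\<And>d. d \<in> J \<Longrightarrow> distr P (N d) (\<lambda>v. v d) = N d"
    unfolding P_def by (rule distr_PiM_component) (auto intro: probN)
  have ind: "P.indep_vars N (\<lambda>d v. v d) J"
  proof (subst P.indep_vars_iff_distr_eq_PiM'[OF Jne])
    show "\<And>d. d \<in> J \<Longrightarrow> (\<lambda>v. v d) \<in> measurable P (N d)"
      unfolding P_def by simp
    have "distr P (PiM J N) (\<lambda>x. \<lambda>d\<in>J. x d) = distr P P (\<lambda>x. x)"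
      by (rule distr_cong) (auto simp: P_def space_PiM PiE_def extensional_restrict)
    also have "\<dots> = P" by simp
    also have "\<dots> = PiM J (\<lambda>d. distr P (N d) (\<lambda>v. v d))"
      unfolding P_def by (rule PiM_cong[OF refl], rule comp[symmetric, unfolded P_def])
    finally show "distr P (PiM J N) (\<lambda>x. \<lambda>d\<in>J. x d) = PiM J (\<lambda>d. distr P (N d) (\<lambda>v. v d))" .
  qed
  have ind2: "P.indep_vars (\<lambda>_. borel) (\<lambda>d v. c d * v d) K"
    by (rule P.indep_vars_compose2[OF P.indep_vars_subset[OF ind K(3)]]) (rule measN, simp)
  have coord: "distributed P lborel (\<lambda>v. v d) (normal_density (m d) (s d))" if "d \<in> J" for d
  proof -
    have "distr P lborel (\<lambda>v. v d) = distr P (N d) (\<lambda>v. v d)"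
      by (rule distr_cong) auto
    also have "\<dots> = density lborel (normal_density (m d) (s d))" using comp[OF that] by (simp add: N_def)
    moreover have "(\<lambda>v. v d) \<in> measurable P (N d)" unfolding P_def using that by simp
    moreover have "measurable P (N d) = measurable P borel" by (rule measurable_cong_sets) simp_all
    ultimately show ?thesis unfolding distributed_def by simp
  qed
  have dist: "distributed P lborel (\<lambda>v. c d * v d) (normal_density (c d * m d) (\<bar>c d\<bar> * s d))"
    if "d \<in> K" for d
    using P.normal_density_affine[OF coord, of d "c d" 0] that s by (auto simp: K_def)
  have "distributed P lborel (\<lambda>v. \<Sum>d\<in>K. c d * v d)
      (normal_density (\<Sum>d\<in>K. c d * m d) (sqrt (\<Sum>d\<in>K. (\<bar>c d\<bar> * s d)\<^sup>2)))"
    by (rule P.sum_indep_normal[OF K(1,2) ind2 _ dist]) (use s in \<open>auto simp: K_def\<close>)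
  moreover have "(\<Sum>d\<in>K. c d * m d) = (\<Sum>d\<in>J. c d * m d)"
    by (rule sum.mono_neutral_left) (auto simp: K_def J)
  moreover have "(\<Sum>d\<in>K. (\<bar>c d\<bar> * s d)\<^sup>2) = (\<Sum>d\<in>J. (c d * s d)\<^sup>2)"
  proof -
    have "(\<Sum>d\<in>K. (\<bar>c d\<bar> * s d)\<^sup>2) = (\<Sum>d\<in>K. (c d * s d)\<^sup>2)" by (simp add: power_mult_distrib)
    also have "\<dots> = (\<Sum>d\<in>J. (c d * s d)\<^sup>2)" by (rule sum.mono_neutral_left) (auto simp: K_def J)
    finally show ?thesis .
  qed
  moreover have "(\<lambda>v. \<Sum>d\<in>K. c d * v d) = (\<lambda>v. \<Sum>d\<in>J. c d * v d)"
    by (rule ext, rule sum.mono_neutral_left) (auto simp: K_def J)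
  ultimately show ?thesis by (simp add: P_def N_def)
qed



lemma std_singleton: "emeasure (density lborel std_normal_density) {T::real} = 0"
proof -
  have "emeasure (density lborel std_normal_density) {T} = (\<integral>\<^sup>+x. ennreal (std_normal_density T) * indicator {T} x \<partial>lborel)"
    by (simp add: emeasure_density)
  also have "\<dots> = 0" by (subst nn_integral_cmult_indicator) auto
  finally show ?thesis .
qed

lemma std_closed_open:
  "measure (density lborel std_normal_density) {T..} = Qfun T"
proof -
  let ?N = "density lborel std_normal_density"
  have z: "measure ?N {T} = 0" using std_singleton[of T] by (simp add: measure_def)
  have "{T..} = {T<..} \<union> {T}" by auto
  interpret prob_space ?N by (rule prob_space_normal_density) simp
  have "measure ?N ({T<..} \<union> {T}) = measure ?N {T<..} + measure ?N {T}"
    by (rule finite_measure_Union) auto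
  then show ?thesis unfolding Qfun_def using z \<open>{T..} = {T<..} \<union> {T}\<close> by simp
qed

lemma Qfun_mono: "T \<le> t \<Longrightarrow> Qfun t \<le> Qfun T"
proof -
  assume "T \<le> t"
  interpret prob_space "density lborel std_normal_density" by (rule prob_space_normal_density) simp
  show ?thesis unfolding Qfun_def by (rule finite_measure_mono) (use \<open>T \<le> t\<close> in auto)
qed

lemma normal_tail:
  assumes P: "prob_space M" and Y: "distributed M lborel Y (normal_density mu sig)" and sig: "sig > 0"
    and T: "T \<le> (K0 - mu) / sig"
  shows "measure M {\<omega> \<in> space M. K0 \<le> Y \<omega>} \<le> Qfun T"
proof -
  interpret prob_space M by (rule P)
  let ?t = "(K0 - mu) / sig"
  have Z: "distributed M lborel (\<lambda>x. (Y x - mu) / sig) std_normal_density"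
    using normal_standard_normal_convert[OF sig, of Y mu] Y by simp
  have "{\<omega> \<in> space M. K0 \<le> Y \<omega>} = (\<lambda>x. (Y x - mu) / sig) -` {?t..} \<inter> space M"
    using sig by (auto simp: divide_le_eq_1 field_simps)
  then have "measure M {\<omega> \<in> space M. K0 \<le> Y \<omega>} = measure (distr M lborel (\<lambda>x. (Y x - mu) / sig)) {?t..}"
    using Z by (subst measure_distr) (auto simp: distributed_def)
  also have "\<dots> = measure (density lborel std_normal_density) {?t..}"
    using Z by (simp add: distributed_def)
  also have "\<dots> = Qfun ?t" by (rule std_closed_open)
  also have "\<dots> \<le> Qfun T" by (rule Qfun_mono[OF T])
  finally show ?thesis .
qed



lemma cs_C:
  fixes Dt :: "nat set" and a b v C :: "nat \<Rightarrow> real"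
  assumes Cp: "\<And>d. d \<in> Dt \<Longrightarrow> C d > 0"
  shows "\<bar>\<Sum>d\<in>Dt. (b d - a d) / C d * v d\<bar>
     \<le> sqrt (\<Sum>d\<in>Dt. (b d - a d)^2 / C d) * sqrt (\<Sum>d\<in>Dt. (v d)^2 / C d)"
proof -
  let ?f = "\<lambda>d. (b d - a d) / sqrt (C d)" and ?g = "\<lambda>d. v d / sqrt (C d)"
  have "\<bar>\<Sum>d\<in>Dt. (b d - a d) / C d * v d\<bar> = \<bar>\<Sum>d\<in>Dt. ?f d * ?g d\<bar>"
  proof -
    have "(\<Sum>d\<in>Dt. (b d - a d) / C d * v d) = (\<Sum>d\<in>Dt. ?f d * ?g d)"
    proof (rule sum.cong[OF refl])
      fix d assume "d \<in> Dt" then have "C d > 0" by (rule Cp)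
      then have "sqrt (C d) * sqrt (C d) = C d" by simp
      then show "(b d - a d) / C d * v d = ?f d * ?g d" by (simp add: field_simps)
    qed
    then show ?thesis by simp
  qed
  also have "\<dots> \<le> (\<Sum>d\<in>Dt. \<bar>?f d\<bar> * \<bar>?g d\<bar>)" by (rule order_trans[OF sum_abs]) (simp add: abs_mult)
  also have "\<dots> \<le> L2_set ?f Dt * L2_set ?g Dt" by (rule L2_set_mult_ineq)
  also have "L2_set ?f Dt = sqrt (\<Sum>d\<in>Dt. (b d - a d)^2 / C d)"
    unfolding L2_set_def by (intro arg_cong[where f=sqrt] sum.cong) (auto simp: power_divide less_imp_le Cp)
  also have "L2_set ?g Dt = sqrt (\<Sum>d\<in>Dt. (v d)^2 / C d)"
    unfolding L2_set_def by (intro arg_cong[where f=sqrt] sum.cong) (auto simp: power_divide less_imp_le Cp)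
  finally show ?thesis .
qed



lemma arith_bound:
  fixes S :: "'s set" and w A :: "'s \<Rightarrow> real" and I :: "'s \<Rightarrow> bool"
  assumes S: "finite S" and w0: "\<And>m. m \<in> S \<Longrightarrow> w m \<ge> 0" and w1: "(\<Sum>m\<in>S. w m) = 1"
    and G: "G > 0" and Gm: "0 \<le> Gm" "Gm \<le> G" and eta: "eta > 0"
    and Arel: "\<And>m. m \<in> S \<Longrightarrow> I m \<Longrightarrow> A m = A0"
    and Airr: "\<And>m. m \<in> S \<Longrightarrow> \<not> I m \<Longrightarrow> A0 - A m \<ge> - 2 * sqrt G * \<delta>"
  shows "1 / sqrt eta * (sqrt Gm / 2 - 2 * (1 - (\<Sum>m\<in>S. if I m then w m else 0)) * \<delta>)
     \<le> ((A0 + G/2) - (\<Sum>m\<in>S. w m * A m)) / (sqrt eta * sqrt G)"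
proof -
  define r where "r = (\<Sum>m\<in>S. if I m then 0 else w m)"
  have r: "1 - (\<Sum>m\<in>S. if I m then w m else 0) = r"
    unfolding r_def w1[symmetric] by (subst sum_subtractf[symmetric]) (rule sum.cong, auto)
  have "A0 - (\<Sum>m\<in>S. w m * A m) = (\<Sum>m\<in>S. w m * (A0 - A m))"
    by (simp add: sum_subtractf right_diff_distrib sum_distrib_right[symmetric] w1)
  also have "\<dots> \<ge> (\<Sum>m\<in>S. (if I m then 0 else w m) * (- 2 * sqrt G * \<delta>))"
  proof (rule sum_mono)
    fix m assume m: "m \<in> S"
    show "(if I m then 0 else w m) * (- 2 * sqrt G * \<delta>) \<le> w m * (A0 - A m)"
      using Arel[OF m] Airr[OF m] w0[OF m] mult_left_mono[of "- 2 * sqrt G * \<delta>" "A0 - A m" "w m"] by auto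
  qed
  also have "(\<Sum>m\<in>S. (if I m then 0 else w m) * (- 2 * sqrt G * \<delta>)) = - 2 * sqrt G * \<delta> * r"
    unfolding r_def by (simp add: sum_distrib_left sum_negf mult.commute mult.left_commute)
  finally have num: "A0 - (\<Sum>m\<in>S. w m * A m) \<ge> - 2 * sqrt G * \<delta> * r" .
  have sG: "sqrt G > 0" "sqrt G * sqrt G = G" using G by auto
  have sGm: "sqrt Gm \<le> sqrt G" using Gm by simp
  have "sqrt G * (sqrt Gm / 2 - 2 * r * \<delta>) \<le> (A0 + G/2) - (\<Sum>m\<in>S. w m * A m)"
  proof -
    have "sqrt G * (sqrt Gm / 2 - 2 * r * \<delta>) \<le> sqrt G * (sqrt G / 2 - 2 * r * \<delta>)"
      using sG sGm by (intro mult_left_mono) auto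
    also have "\<dots> = G/2 - 2 * sqrt G * \<delta> * r" using sG by (simp add: algebra_simps)
    finally show ?thesis using num by linarith
  qed
  then have "(sqrt Gm / 2 - 2 * r * \<delta>) \<le> ((A0 + G/2) - (\<Sum>m\<in>S. w m * A m)) / sqrt G"
    using sG by (simp add: le_divide_eq mult.commute)
  then have "(sqrt Gm / 2 - 2 * r * \<delta>) / sqrt eta \<le> ((A0 + G/2) - (\<Sum>m\<in>S. w m * A m)) / sqrt G / sqrt eta"
    using eta by (intro divide_right_mono) auto
  then show ?thesis unfolding r by (simp add: divide_divide_eq_left mult.commute)
qed



lemma pair_bound:
  fixes M :: "'a measure"
    and L D :: nat
    and mu :: "nat \<Rightarrow> nat \<Rightarrow> real"
    and C :: "nat \<Rightarrow> real"
    and Dt :: "nat set"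
    and S :: "'s set"
    and w :: "'s \<Rightarrow> real"
    and l0 :: nat
    and I :: "'s \<Rightarrow> bool"
    and lm :: "'s \<Rightarrow> nat"
    and f :: "'s \<Rightarrow> 'a \<Rightarrow> nat \<Rightarrow> real"
  assumes P: "prob_space M"
    and C_pos: "\<And>d. d \<in> {1..D} \<Longrightarrow> C d > 0"
    and Dt: "Dt \<subseteq> {1..D}"
    and distinct: "\<And>l l'. l \<in> {1..L} \<Longrightarrow> l' \<in> {1..L} \<Longrightarrow> l \<noteq> l' \<Longrightarrow>
                     (\<lambda>d\<in>Dt. mu l d) \<noteq> (\<lambda>d\<in>Dt. mu l' d)"
    and S: "finite S"
    and w_nonneg: "\<And>m. m \<in> S \<Longrightarrow> w m \<ge> 0"
    and w_sum: "(\<Sum>m\<in>S. w m) = 1"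
    and l0: "l0 \<in> {1..L}"
    and lm: "\<And>m. m \<in> S \<Longrightarrow> \<not> I m \<Longrightarrow> lm m \<in> {1..L} \<and> lm m \<noteq> l0"
    and indep: "prob_space.indep_vars M (\<lambda>_. PiM Dt (\<lambda>_. borel))
                   (\<lambda>m \<omega>. \<lambda>d\<in>Dt. f m \<omega> d) S"
    and distr: "\<And>m. m \<in> S \<Longrightarrow>
                  distr M (PiM Dt (\<lambda>_. borel)) (\<lambda>\<omega>. \<lambda>d\<in>Dt. f m \<omega> d)
                  = gauss_diag Dt (mu (if I m then l0 else lm m)) C"
    and l: "l \<in> {1..L}" "l \<noteq> l0"
  shows "{\<omega> \<in> space M. mahal Dt C (\<lambda>d. \<Sum>m\<in>S. w m * f m \<omega> d) (mu l)
                       \<le> mahal Dt C (\<lambda>d. \<Sum>m\<in>S. w m * f m \<omega> d) (mu l0)} \<in> sets M \<and>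
    measure M {\<omega> \<in> space M. mahal Dt C (\<lambda>d. \<Sum>m\<in>S. w m * f m \<omega> d) (mu l)
                       \<le> mahal Dt C (\<lambda>d. \<Sum>m\<in>S. w m * f m \<omega> d) (mu l0)}
    \<le> Qfun (1 / sqrt (\<Sum>m\<in>S. (w m)^2) *
          (sqrt (Min {(\<Sum>d\<in>Dt. (mu l d - mu l' d)^2 / C d) | l l'.
                        l \<in> {1..L} \<and> l' \<in> {1..L} \<and> l \<noteq> l'}) / 2
           - 2 * (1 - (\<Sum>m\<in>S. if I m then w m else 0))
               * Max {sqrt (\<Sum>d\<in>Dt. (mu l d)^2 / C d) | l. l \<in> {1..L}}))"
proof -
  interpret prob_space M by (rule P)
  define a where "a = mu l0"
  define b where "b = mu l"
  define c where "c = (\<lambda>d. (b d - a d) / C d)"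
  define cls where "cls = (\<lambda>m. if I m then l0 else lm m)"
  define h where "h = (\<lambda>v::nat\<Rightarrow>real. \<Sum>d\<in>Dt. c d * v d)"
  define Sp where "Sp = {m\<in>S. w m > 0}"
  define G where "G = (\<Sum>d\<in>Dt. (b d - a d)^2 / C d)"
  define eta where "eta = (\<Sum>m\<in>S. (w m)^2)"
  define A where "A = (\<lambda>m. \<Sum>d\<in>Dt. c d * mu (cls m) d)"
  define A0 where "A0 = (\<Sum>d\<in>Dt. c d * a d)"
  define K0 where "K0 = (\<Sum>d\<in>Dt. c d * (a d + b d) / 2)"
  define Y where "Y = (\<lambda>\<omega>. \<Sum>m\<in>Sp. w m * h (\<lambda>d\<in>Dt. f m \<omega> d))"
  have Cp: "\<And>d. d \<in> Dt \<Longrightarrow> C d > 0" using C_pos Dt by auto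
  have finDt: "finite Dt" using Dt finite_subset by blast
  obtain d1 where d1: "d1 \<in> Dt" "mu l d1 \<noteq> mu l0 d1"
    using distinct[OF l(1) l0 l(2)] by (metis restrict_ext)
  have Gpos: "G > 0" unfolding G_def
    by (rule sum_pos2[OF finDt d1(1)]) (use d1 Cp in \<open>auto simp: a_def b_def less_imp_le\<close>)
  have cne: "\<exists>d\<in>Dt. c d \<noteq> 0" using d1 Cp[OF d1(1)] by (auto simp: c_def a_def b_def)
  have Gc: "(\<Sum>d\<in>Dt. (c d * sqrt (C d))^2) = G" unfolding G_def
  proof (rule sum.cong[OF refl])
    fix d assume "d \<in> Dt" then have "C d > 0" by (rule Cp)
    then have "(c d * sqrt (C d))^2 = (c d)^2 * C d" by (simp add: power_mult_distrib)
    also have "\<dots> = (b d - a d)^2 / C d" using \<open>C d > 0\<close>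
      by (simp add: c_def power_divide power2_eq_square field_simps)
    finally show "(c d * sqrt (C d))^2 = (b d - a d)^2 / C d" .
  qed
  have hmeas: "(\<lambda>v. \<alpha> * h v) \<in> borel_measurable (PiM Dt (\<lambda>_. borel))" for \<alpha>
    unfolding h_def by measurable
  have Vmeas: "(\<lambda>\<omega>. \<lambda>d\<in>Dt. f m \<omega> d) \<in> measurable M (PiM Dt (\<lambda>_. borel))" if "m \<in> S" for m
    using indep that unfolding indep_vars_def by auto
  have dist_h: "distributed M lborel (\<lambda>\<omega>. h (\<lambda>d\<in>Dt. f m \<omega> d)) (normal_density (A m) (sqrt G))"
    if m: "m \<in> S" for m
  proof -
    have hm: "h \<in> borel_measurable (PiM Dt (\<lambda>_. borel))" using hmeas[of 1] by simp
    have "distr M lborel (\<lambda>\<omega>. h (\<lambda>d\<in>Dt. f m \<omega> d))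
        = distr (distr M (PiM Dt (\<lambda>_. borel)) (\<lambda>\<omega>. \<lambda>d\<in>Dt. f m \<omega> d)) lborel h"
      using hm Vmeas[OF m] by (subst distr_distr) (auto simp: comp_def)
    also have "\<dots> = distr (gauss_diag Dt (mu (cls m)) C) lborel h"
      using distr[OF m] by (simp add: cls_def)
    also have "\<dots> = density lborel (normal_density (A m) (sqrt G))"
      using gauss_lin[OF finDt, of "\<lambda>d. sqrt (C d)" c "mu (cls m)"] Cp cne
      unfolding distributed_def gauss_diag_def A_def h_def Gc by auto
    finally show ?thesis unfolding distributed_def using hm Vmeas[OF m] by auto
  qed
  have SpS: "Sp \<subseteq> S" by (auto simp: Sp_def)
  have finSp: "finite Sp" using S SpS finite_subset by blast
  have Spne: "Sp \<noteq> {}"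
  proof
    assume "Sp = {}"
    then have "\<And>m. m \<in> S \<Longrightarrow> w m = 0" using w_nonneg by (force simp: Sp_def)
    then have "(\<Sum>m\<in>S. w m) = 0" by simp
    then show False using w_sum by simp
  qed
  have sG: "sqrt G > 0" using Gpos by simp
  have dist_w: "distributed M lborel (\<lambda>\<omega>. w m * h (\<lambda>d\<in>Dt. f m \<omega> d)) (normal_density (w m * A m) (w m * sqrt G))"
    if m: "m \<in> Sp" for m
  proof -
    have wm: "w m > 0" "m \<in> S" using m by (auto simp: Sp_def)
    show ?thesis using normal_density_affine[OF dist_h[OF wm(2)] sG, of "w m" 0] wm by simp
  qed
  have indSp: "indep_vars (\<lambda>_. borel) (\<lambda>m \<omega>. w m * h (\<lambda>d\<in>Dt. f m \<omega> d)) Sp"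
    using indep_vars_compose2[OF indep_vars_subset[OF indep SpS], of "\<lambda>m v. w m * h v" "\<lambda>_. borel"]
      hmeas by simp
  have distY0: "distributed M lborel Y (normal_density (\<Sum>m\<in>Sp. w m * A m) (sqrt (\<Sum>m\<in>Sp. (w m * sqrt G)^2)))"
    unfolding Y_def
    by (rule sum_indep_normal[OF finSp Spne indSp _ dist_w]) (use sG in \<open>auto simp: Sp_def\<close>)
  have eqA: "(\<Sum>m\<in>Sp. w m * A m) = (\<Sum>m\<in>S. w m * A m)"
    by (rule sum.mono_neutral_left[OF S SpS]) (use w_nonneg in \<open>force simp: Sp_def\<close>)
  have "(\<Sum>m\<in>Sp. (w m * sqrt G)^2) = G * (\<Sum>m\<in>Sp. (w m)^2)"
    using Gpos by (simp add: power_mult_distrib sum_distrib_left mult.commute)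
  also have "(\<Sum>m\<in>Sp. (w m)^2) = eta" unfolding eta_def
    by (rule sum.mono_neutral_left[OF S SpS]) (use w_nonneg in \<open>force simp: Sp_def\<close>)
  finally have eqS: "sqrt (\<Sum>m\<in>Sp. (w m * sqrt G)^2) = sqrt eta * sqrt G"
    by (simp add: real_sqrt_mult mult.commute)
  have distY: "distributed M lborel Y (normal_density (\<Sum>m\<in>S. w m * A m) (sqrt eta * sqrt G))"
    using distY0 unfolding eqA eqS .
  have etapos: "eta > 0"
  proof -
    obtain m where m: "m \<in> Sp" using Spne by auto
    show ?thesis unfolding eta_def
      by (rule sum_pos2[OF S, of m]) (use m in \<open>auto simp: Sp_def\<close>)
  qed
  have Ymeas: "Y \<in> borel_measurable M" using distY by (auto simp: distributed_def)
  have Fsum: "(\<Sum>d\<in>Dt. c d * (\<Sum>m\<in>S. w m * f m \<omega> d)) = Y \<omega>" for \<omega>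
  proof -
    have "(\<Sum>d\<in>Dt. c d * (\<Sum>m\<in>S. w m * f m \<omega> d)) = (\<Sum>m\<in>S. w m * (\<Sum>d\<in>Dt. c d * f m \<omega> d))"
      by (simp add: sum_distrib_left mult.left_commute sum.swap[of _ Dt])
    also have "\<dots> = (\<Sum>m\<in>S. w m * h (\<lambda>d\<in>Dt. f m \<omega> d))"
      unfolding h_def by (intro sum.cong refl arg_cong2[where f="(*)"]) auto
    also have "\<dots> = Y \<omega>" unfolding Y_def
      by (rule sum.mono_neutral_right[OF S SpS]) (use w_nonneg in \<open>force simp: Sp_def\<close>)
    finally show ?thesis .
  qed
  have mahal_eq: "mahal Dt C F b - mahal Dt C F a = 2 * (K0 - (\<Sum>d\<in>Dt. c d * F d))" for F
  proof -
    have "mahal Dt C F b - mahal Dt C F a = (\<Sum>d\<in>Dt. 2 * (c d * (a d + b d) / 2 - c d * F d))"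
      unfolding mahal_def sum_subtractf[symmetric]
    proof (rule sum.cong[OF refl])
      fix d assume "d \<in> Dt" then have "C d > 0" by (rule Cp)
      then show "(F d - b d)^2 / C d - (F d - a d)^2 / C d = 2 * (c d * (a d + b d) / 2 - c d * F d)"
        by (simp add: c_def field_simps power2_eq_square)
    qed
    also have "\<dots> = 2 * (K0 - (\<Sum>d\<in>Dt. c d * F d))"
      unfolding K0_def by (simp add: sum_distrib_left sum_distrib_right sum_subtractf sum_divide_distrib[symmetric] mult.commute)
    finally show ?thesis .
  qed
  have event: "{\<omega> \<in> space M. mahal Dt C (\<lambda>d. \<Sum>m\<in>S. w m * f m \<omega> d) (mu l)
                       \<le> mahal Dt C (\<lambda>d. \<Sum>m\<in>S. w m * f m \<omega> d) (mu l0)}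
      = {\<omega> \<in> space M. K0 \<le> Y \<omega>}"
  proof -
    have "mahal Dt C F b \<le> mahal Dt C F a \<longleftrightarrow> K0 \<le> (\<Sum>d\<in>Dt. c d * F d)" for F
      using mahal_eq[of F] by (smt (verit))
    then show ?thesis using Fsum by (auto simp: a_def b_def)
  qed
  let ?GS = "{(\<Sum>d\<in>Dt. (mu l d - mu l' d)^2 / C d) | l l'. l \<in> {1..L} \<and> l' \<in> {1..L} \<and> l \<noteq> l'}"
  let ?DS = "{sqrt (\<Sum>d\<in>Dt. (mu l d)^2 / C d) | l. l \<in> {1..L}}"
  have "?GS \<subseteq> (\<lambda>(l,l'). \<Sum>d\<in>Dt. (mu l d - mu l' d)^2 / C d) ` ({1..L}\<times>{1..L})" by auto
  then have finGS: "finite ?GS" by (rule finite_subset) auto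
  have GinGS: "G \<in> ?GS" unfolding G_def a_def b_def using l l0 by blast
  have Gm: "Min ?GS \<le> G" by (rule Min_le[OF finGS GinGS])
  have GSnn: "\<forall>x\<in>?GS. 0 \<le> x" using Cp by (force intro!: sum_nonneg divide_nonneg_pos)
  have Gm0: "0 \<le> Min ?GS" using Min_in[OF finGS] GinGS GSnn by blast
  have "?DS = (\<lambda>l. sqrt (\<Sum>d\<in>Dt. (mu l d)^2 / C d)) ` {1..L}" by auto
  then have finDS: "finite ?DS" by simp
  have delta: "sqrt (\<Sum>d\<in>Dt. (mu k d)^2 / C d) \<le> Max ?DS" if "k \<in> {1..L}" for k
    by (rule Max_ge[OF finDS]) (use that in blast)
  have normk: "\<bar>\<Sum>d\<in>Dt. c d * mu k d\<bar> \<le> sqrt G * Max ?DS" if "k \<in> {1..L}" for k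
  proof -
    have "\<bar>\<Sum>d\<in>Dt. c d * mu k d\<bar> \<le> sqrt G * sqrt (\<Sum>d\<in>Dt. (mu k d)^2 / C d)"
      using cs_C[of Dt C b a "mu k"] Cp unfolding c_def G_def by blast
    also have "\<dots> \<le> sqrt G * Max ?DS" by (rule mult_left_mono[OF delta[OF that]]) (use Gpos in simp)
    finally show ?thesis .
  qed
  have Arel: "A m = A0" if "m \<in> S" "I m" for m using that by (simp add: A_def A0_def cls_def a_def)
  have Airr: "A0 - A m \<ge> - 2 * sqrt G * Max ?DS" if "m \<in> S" "\<not> I m" for m
  proof -
    have "cls m \<in> {1..L}" using lm[OF that] that by (simp add: cls_def)
    then have "\<bar>A m\<bar> \<le> sqrt G * Max ?DS" unfolding A_def by (rule normk)
    moreover have "\<bar>A0\<bar> \<le> sqrt G * Max ?DS" unfolding A0_def a_def by (rule normk[OF l0])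
    ultimately show ?thesis by linarith
  qed
  have K0eq: "K0 = A0 + G/2"
  proof -
    have "K0 = (\<Sum>d\<in>Dt. c d * a d + (b d - a d)^2 / C d / 2)" unfolding K0_def
    proof (rule sum.cong[OF refl])
      fix d assume "d \<in> Dt" then have "C d > 0" by (rule Cp)
      then show "c d * (a d + b d) / 2 = c d * a d + (b d - a d)^2 / C d / 2"
        by (simp add: c_def field_simps power2_eq_square)
    qed
    also have "\<dots> = A0 + G/2" unfolding A0_def G_def by (simp add: sum.distrib sum_divide_distrib)
    finally show ?thesis .
  qed
  have T: "1 / sqrt eta * (sqrt (Min ?GS) / 2 - 2 * (1 - (\<Sum>m\<in>S. if I m then w m else 0)) * Max ?DS)
     \<le> (K0 - (\<Sum>m\<in>S. w m * A m)) / (sqrt eta * sqrt G)"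
    using arith_bound[OF S w_nonneg w_sum Gpos Gm0 Gm etapos Arel Airr] K0eq by simp
  have sig: "sqrt eta * sqrt G > 0" using etapos sG by simp
  have "measure M {\<omega> \<in> space M. K0 \<le> Y \<omega>} \<le> Qfun (1 / sqrt eta * (sqrt (Min ?GS) / 2 - 2 * (1 - (\<Sum>m\<in>S. if I m then w m else 0)) * Max ?DS))"
    by (rule normal_tail[OF P distY sig T])
  moreover have "{\<omega> \<in> space M. K0 \<le> Y \<omega>} \<in> sets M" using Ymeas by measurable
  ultimately show ?thesis unfolding event eta_def by simp
qed

theorem theorem1:
  fixes M :: "'a measure"
    and L D :: nat
    and mu :: "nat \<Rightarrow> nat \<Rightarrow> real"
    and C :: "nat \<Rightarrow> real"
    and Dt :: "nat set"
    and S :: "'s set"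
    and w :: "'s \<Rightarrow> real"
    and l0 :: nat
    and I :: "'s \<Rightarrow> bool"
    and lm :: "'s \<Rightarrow> nat"
    and f :: "'s \<Rightarrow> 'a \<Rightarrow> nat \<Rightarrow> real"
    and lhat :: "'a \<Rightarrow> nat"
  assumes "prob_space M"
    and "L \<ge> 2" and "D \<ge> 1"
    and C_pos: "\<And>d. d \<in> {1..D} \<Longrightarrow> C d > 0"
    and "Dt \<subseteq> {1..D}" and "Dt \<noteq> {}"
    and distinct: "\<And>l l'. l \<in> {1..L} \<Longrightarrow> l' \<in> {1..L} \<Longrightarrow> l \<noteq> l' \<Longrightarrow>
                     (\<lambda>d\<in>Dt. mu l d) \<noteq> (\<lambda>d\<in>Dt. mu l' d)"
    and "finite S" and "S \<noteq> {}"
    and w_nonneg: "\<And>m. m \<in> S \<Longrightarrow> w m \<ge> 0"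
    and w_sum: "(\<Sum>m\<in>S. w m) = 1"
    and l0: "l0 \<in> {1..L}"
    and lm: "\<And>m. m \<in> S \<Longrightarrow> \<not> I m \<Longrightarrow> lm m \<in> {1..L} \<and> lm m \<noteq> l0"
    and indep: "prob_space.indep_vars M (\<lambda>_. PiM Dt (\<lambda>_. borel))
                   (\<lambda>m \<omega>. \<lambda>d\<in>Dt. f m \<omega> d) S"
    and distr: "\<And>m. m \<in> S \<Longrightarrow>
                  distr M (PiM Dt (\<lambda>_. borel)) (\<lambda>\<omega>. \<lambda>d\<in>Dt. f m \<omega> d)
                  = gauss_diag Dt (mu (if I m then l0 else lm m)) C"
    and lhat_meas: "lhat \<in> measurable M (count_space UNIV)"
    and lhat_argmin: "\<And>\<omega>. \<omega> \<in> space M \<Longrightarrow> lhat \<omega> \<in> {1..L} \<and>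
         (\<forall>l\<in>{1..L}. mahal Dt C (\<lambda>d. \<Sum>m\<in>S. w m * f m \<omega> d) (mu (lhat \<omega>))
                       \<le> mahal Dt C (\<lambda>d. \<Sum>m\<in>S. w m * f m \<omega> d) (mu l))"
  shows "measure M {\<omega> \<in> space M. lhat \<omega> = l0}
    \<ge> 1 - (real L - 1) *
        Qfun (1 / sqrt (\<Sum>m\<in>S. (w m)^2) *
          (sqrt (Min {(\<Sum>d\<in>Dt. (mu l d - mu l' d)^2 / C d) | l l'.
                        l \<in> {1..L} \<and> l' \<in> {1..L} \<and> l \<noteq> l'}) / 2
           - 2 * (1 - (\<Sum>m\<in>S. if I m then w m else 0))
               * Max {sqrt (\<Sum>d\<in>Dt. (mu l d)^2 / C d) | l. l \<in> {1..L}}))"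
  proof -
  interpret prob_space M by fact
  let ?T = "1 / sqrt (\<Sum>m\<in>S. (w m)^2) *
          (sqrt (Min {(\<Sum>d\<in>Dt. (mu l d - mu l' d)^2 / C d) | l l'.
                        l \<in> {1..L} \<and> l' \<in> {1..L} \<and> l \<noteq> l'}) / 2
           - 2 * (1 - (\<Sum>m\<in>S. if I m then w m else 0))
               * Max {sqrt (\<Sum>d\<in>Dt. (mu l d)^2 / C d) | l. l \<in> {1..L}})"
  let ?E = "\<lambda>l. {\<omega> \<in> space M. mahal Dt C (\<lambda>d. \<Sum>m\<in>S. w m * f m \<omega> d) (mu l)
                       \<le> mahal Dt C (\<lambda>d. \<Sum>m\<in>S. w m * f m \<omega> d) (mu l0)}"
  let ?J = "{1..L} - {l0}"
  have pb: "?E l \<in> sets M \<and> measure M (?E l) \<le> Qfun ?T" if "l \<in> ?J" for l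
    by (rule pair_bound[OF \<open>prob_space M\<close> C_pos \<open>Dt \<subseteq> {1..D}\<close> distinct \<open>finite S\<close> w_nonneg w_sum l0 lm indep distr])
       (use that in auto)
  have sub: "{\<omega> \<in> space M. lhat \<omega> \<noteq> l0} \<subseteq> (\<Union>l\<in>?J. ?E l)"
  proof
    fix \<omega> assume "\<omega> \<in> {\<omega> \<in> space M. lhat \<omega> \<noteq> l0}"
    then have w: "\<omega> \<in> space M" "lhat \<omega> \<noteq> l0" by auto
    with lhat_argmin[OF w(1)] l0 show "\<omega> \<in> (\<Union>l\<in>?J. ?E l)" by blast
  qed
  have Bset: "{\<omega> \<in> space M. lhat \<omega> \<noteq> l0} \<in> sets M"
  proof -
    have "{\<omega> \<in> space M. lhat \<omega> \<noteq> l0} = lhat -` (UNIV - {l0}) \<inter> space M" by auto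
    then show ?thesis using measurable_sets[OF lhat_meas, of "UNIV - {l0}"] by simp
  qed
  have Esets: "?E ` ?J \<subseteq> sets M" by (intro image_subsetI) (use pb in blast)
  have "measure M {\<omega> \<in> space M. lhat \<omega> \<noteq> l0} \<le> measure M (\<Union>l\<in>?J. ?E l)"
    by (rule finite_measure_mono[OF sub]) (use Esets in auto)
  also have "\<dots> \<le> (\<Sum>l\<in>?J. measure M (?E l))"
    by (rule finite_measure_subadditive_finite) (use Esets in auto)
  also have "\<dots> \<le> (\<Sum>l\<in>?J. Qfun ?T)" by (rule sum_mono) (use pb in blast)
  also have "\<dots> = (real L - 1) * Qfun ?T"
  proof -
    have "card ?J = L - 1" using l0 by simp
    then show ?thesis using \<open>L \<ge> 2\<close> by (simp add: of_nat_diff)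
  qed
  finally have bad: "measure M {\<omega> \<in> space M. lhat \<omega> \<noteq> l0} \<le> (real L - 1) * Qfun ?T" .
  have "{\<omega> \<in> space M. lhat \<omega> = l0} = space M - {\<omega> \<in> space M. lhat \<omega> \<noteq> l0}" by auto
  then have "measure M {\<omega> \<in> space M. lhat \<omega> = l0} = 1 - measure M {\<omega> \<in> space M. lhat \<omega> \<noteq> l0}"
    using prob_compl[OF Bset] by simp
  with bad show ?thesis by simp
qed

end
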